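(* Fix an integer $q\ge2$, $c\in\mathbb{R}$ and $\lambda\in(-1/q-c,-c)$ such that $f_c$ satisfies the pre-$q$-Sturmian condition for $\lambda$, with Lipschitz function $\psi$ and constant $\beta$; regard $\psi$ as a $1$-periodic function on $\mathbb{R}$ and $T(x)=qx$ on $\mathbb{R}$. Let $\theta=\lambda+1/q+c\in(0,1/q)$ and $f=f_0$. Then: (i) For any $x\in(\lambda+q^{-1},\lambda+2q^{-1})$, with $t:=x-\lambda-q^{-1}$, $$\psi(T(x))-\psi(T(\lambda+q^{-1}))\ge f(q^{-1}-\theta-t)-f(q^{-1}-\theta)+f'(\theta)\frac{t}{q-1}.$$ (i)' For any $x\in(\lambda-q^{-1},\lambda)$, with $t:=\lambda-x$, $$\psi(T(x))-\psi(T(\lambda))\ge f(\theta-t)-f(\theta)+f'(q^{-1}-\theta)\frac{t}{q-1}.$$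
   Context: $\mathbb{T}=\mathbb{R}/\mathbb{Z}$. $f_0(x)=\log\left|\frac{\sin\pi qx}{\sin\pi x}\right|$ (value $\log q$ at integers), a $1$-periodic even function, real-analytic and strictly concave on $(-1/q,1/q)$; $f_c(x)=f_0(x+c)$. $C_\lambda=[\lambda,\lambda+1/q]\bmod1$. The function $f_c$ satisfies the pre-$q$-Sturmian condition for $\lambda$ if $f_c$ is Lipschitz on $C_\lambda$ and there exist a Lipschitz $\psi:\mathbb{T}\to\mathbb{R}$ and $\beta\in\mathbb{R}$ with $f_c(x)+\psi(x)-\psi(Tx)=\beta$ for all $x\in C_\lambda$, where $Tx=qx\bmod 1$. *)

theory Defs
  imports "HOL-Analysis.Analysis"
begin

definition f0 :: "nat \<Rightarrow> real \<Rightarrow> real" where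
  "f0 q x = (if x \<in> \<int> then ln (real q)
             else ln \<bar>sin (pi * real q * x) / sin (pi * x)\<bar>)"

definition fc :: "nat \<Rightarrow> real \<Rightarrow> real \<Rightarrow> real" where
  "fc q c x = f0 q (x + c)"

text \<open>Preimage in R of the arc C_lambda = [lambda, lambda + 1/q] mod 1.\<close>
definition Cset :: "nat \<Rightarrow> real \<Rightarrow> real set" where
  "Cset q lam = {x. \<exists>k::int. x - of_int k \<in> {lam .. lam + 1 / real q}}"

text \<open>Pre-q-Sturmian condition for lambda, witnessed by psi (a Lipschitz function
  on the circle, i.e. a 1-periodic Lipschitz function on R) and the constant beta;
  T x = q x mod 1, which is q x on R since psi is 1-periodic.\<close>
definition pre_sturmian_with ::
    "nat \<Rightarrow> real \<Rightarrow> real \<Rightarrow> (real \<Rightarrow> real) \<Rightarrow> real \<Rightarrow> bool" where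
  "pre_sturmian_with q c lam psi beta \<longleftrightarrow>
     (\<exists>L. L-lipschitz_on (Cset q lam) (fc q c)) \<and>
     (\<forall>x. psi (x + 1) = psi x) \<and>
     (\<exists>L. L-lipschitz_on UNIV psi) \<and>
     (\<forall>x \<in> Cset q lam. fc q c x + psi x - psi (real q * x) = beta)"

end

theory Submission
  imports Defs "HOL-Analysis.Analysis"
begin


lemma per_int:
  fixes psi :: "real \<Rightarrow> real"
  assumes per: "\<forall>x. psi (x + 1) = psi x"
  shows "psi (x + of_int k) = psi x"
proof -
  have pn: "psi (y + real n) = psi y" for y n
  proof (induction n)
    case (Suc n)
    have "psi (y + real (Suc n)) = psi ((y + real n) + 1)" by (simp add: algebra_simps)
    also have "\<dots> = psi (y + real n)" using per by blast
    finally show ?case using Suc by simp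
  qed simp
  have mn: "psi (y - real n) = psi y" for y n
    using pn[of "y - real n" n] by simp
  show ?thesis
  proof (cases k rule: int_cases)
    case (nonneg n)
    then show ?thesis using pn[of x n] by simp
  next
    case (neg n)
    then have "real_of_int k = - real (Suc n)" by simp
    moreover have "x + - real (Suc n) = x - real (Suc n)" by simp
    ultimately show ?thesis using mn[of x "Suc n"] by metis
  qed
qed

lemma iter_step:
  fixes psi :: "real \<Rightarrow> real" and q lam A C :: real
  assumes q: "q > 1" and per: "\<forall>x. psi (x+1) = psi x"
   and E: "\<And>y1 y2. lam \<le> y1 \<Longrightarrow> y1 \<le> y2 \<Longrightarrow> y2 \<le> lam + 1/q \<Longrightarrow>
        psi (q*y2) - psi (q*y1) - (psi y2 - psi y1) \<ge> A*(y2-y1)"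
   and QC: "\<And>z1 z2. z1 \<le> z2 \<Longrightarrow> z2 \<le> z1 + 1 \<Longrightarrow>
        psi z2 - psi z1 - A/(q-1)*(z2-z1) \<ge> -C*(z2-z1)"
   and z: "z1 \<le> z2" "z2 \<le> z1 + 1"
  shows "psi z2 - psi z1 - A/(q-1)*(z2-z1) \<ge> -(C/q)*(z2-z1)"
proof -
  define m where "m = A/(q-1)"
  have Am: "(A + m) / q = m" using q unfolding m_def by (simp add: field_simps)
  have one: "psi w2 - psi w1 - m*(w2-w1) \<ge> -(C/q)*(w2-w1)"
    if w: "q*lam \<le> w1" "w1 \<le> w2" "w2 \<le> q*lam+1" for w1 w2
  proof -
    define y1 where "y1 = w1/q"
    define y2 where "y2 = w2/q"
    have w1: "w1 = q*y1" and w2: "w2 = q*y2" using q by (auto simp: y1_def y2_def)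
    have y: "lam \<le> y1" "y1 \<le> y2" "y2 \<le> lam + 1/q"
      using w q by (auto simp: y1_def y2_def field_simps)
    have d: "y2 - y1 = (w2 - w1)/q" using q by (simp add: y1_def y2_def diff_divide_distrib)
    have "y2 \<le> y1 + 1"
    proof -
      have "y2 - y1 \<le> 1/q" using y by simp
      also have "\<dots> \<le> 1" using q by simp
      finally show ?thesis by simp
    qed
    then have h2: "psi y2 - psi y1 - m*(y2-y1) \<ge> -C*(y2-y1)"
      using QC[of y1 y2] y unfolding m_def by simp
    have h1: "psi w2 - psi w1 - (psi y2 - psi y1) \<ge> A*(y2-y1)"
      using E[OF y] w1 w2 by simp
    have "psi w2 - psi w1 \<ge> (A + m - C) * (y2 - y1)"
      using h1 h2 by (simp add: algebra_simps)
    also have "(A + m - C) * (y2 - y1) = ((A+m)/q) * (w2-w1) - (C/q)*(w2-w1)"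
      unfolding d using q by (simp add: field_simps)
    finally show ?thesis unfolding Am by (simp add: algebra_simps)
  qed
  define k where "k = \<lfloor>z1 - q*lam\<rfloor>"
  define w1 where "w1 = z1 - of_int k"
  define w2 where "w2 = z2 - of_int k"
  have pw1: "psi w1 = psi z1" using per_int[OF per, of z1 "-k"] by (simp add: w1_def)
  have pw2: "psi w2 = psi z2" using per_int[OF per, of z2 "-k"] by (simp add: w2_def)
  have w1b: "q*lam \<le> w1" "w1 < q*lam + 1" unfolding w1_def k_def
    using floor_correct[of "z1 - q*lam"] by linarith+
  have ww: "w1 \<le> w2" "w2 \<le> w1 + 1" "w2 - w1 = z2 - z1" using z by (auto simp: w1_def w2_def)
  show ?thesis
  proof (cases "w2 \<le> q*lam+1")
    case True
    then show ?thesis using one[of w1 w2] w1b ww pw1 pw2 unfolding m_def by simp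
  next
    case False
    have a: "psi (q*lam+1) - psi w1 - m*(q*lam+1-w1) \<ge> -(C/q)*(q*lam+1-w1)"
      using one[of w1 "q*lam+1"] w1b by simp
    have b: "psi (w2-1) - psi (q*lam) - m*(w2-1-q*lam) \<ge> -(C/q)*(w2-1-q*lam)"
      using one[of "q*lam" "w2-1"] w1b ww False by simp
    have p1: "psi (q*lam+1) = psi (q*lam)" using per by simp
    have p2: "psi (w2-1) = psi w2" using per[rule_format, of "w2-1"] by simp
    have e1: "psi w2 - psi w1 - m*(w2-w1) = (psi (w2-1) - psi (q*lam) - m*(w2-1-q*lam))
       + (psi (q*lam+1) - psi w1 - m*(q*lam+1-w1))" using p1 p2 by (simp add: algebra_simps)
    have e2: "-(C/q)*(w2-w1) = -(C/q)*(w2-1-q*lam) + -(C/q)*(q*lam+1-w1)"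
      by (simp add: algebra_simps diff_divide_distrib)
    have "psi w2 - psi w1 - m*(w2-w1) \<ge> -(C/q)*(w2-w1)"
      unfolding e1 e2 using a b by linarith
    then show ?thesis using pw1 pw2 ww unfolding m_def by simp
  qed
qed

lemma iter_all:
  fixes psi :: "real \<Rightarrow> real" and q lam A L :: real
  assumes q: "q > 1" and per: "\<forall>x. psi (x+1) = psi x"
   and E: "\<And>y1 y2. lam \<le> y1 \<Longrightarrow> y1 \<le> y2 \<Longrightarrow> y2 \<le> lam + 1/q \<Longrightarrow>
        psi (q*y2) - psi (q*y1) - (psi y2 - psi y1) \<ge> A*(y2-y1)"
   and Lip: "\<And>x y. \<bar>psi x - psi y\<bar> \<le> L * \<bar>x - y\<bar>"
   and z: "z1 \<le> z2" "z2 \<le> z1 + 1"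
  shows "psi z2 - psi z1 \<ge> A/(q-1)*(z2-z1)"
proof -
  define m where "m = A/(q-1)"
  define C0 where "C0 = \<bar>L\<bar> + \<bar>m\<bar>"
  have Q: "\<forall>z1 z2. z1 \<le> z2 \<longrightarrow> z2 \<le> z1 + 1 \<longrightarrow>
        psi z2 - psi z1 - A/(q-1)*(z2-z1) \<ge> -(C0/q^n)*(z2-z1)" for n
  proof (induction n)
    case 0
    show ?case proof (intro allI impI)
    fix z1 z2 :: real assume zz: "z1 \<le> z2" "z2 \<le> z1 + 1"
    have a1: "\<bar>psi z2 - psi z1\<bar> \<le> L * (z2 - z1)" using Lip[of z2 z1] zz by simp
    have a2: "L * (z2 - z1) \<le> \<bar>L\<bar> * (z2-z1)" using zz by (simp add: mult_right_mono)
    have a3: "m * (z2 - z1) \<le> \<bar>m\<bar> * (z2-z1)" using zz by (simp add: mult_right_mono)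
    have a4: "psi z2 - psi z1 \<ge> - (\<bar>L\<bar> * (z2-z1))" using a1 a2 by linarith
    have "psi z2 - psi z1 - m*(z2-z1) \<ge> -(C0)*(z2-z1)"
      using a3 a4 unfolding C0_def by (simp add: algebra_simps)
    then show "psi z2 - psi z1 - A/(q-1)*(z2-z1) \<ge> -(C0/q^0)*(z2-z1)"
      unfolding m_def by simp
    qed
  next
    case (Suc n)
    show ?case proof (intro allI impI)
    fix z1 z2 :: real assume zz: "z1 \<le> z2" "z2 \<le> z1 + 1"
    have "psi z2 - psi z1 - A/(q-1)*(z2-z1) \<ge> -((C0/q^n)/q)*(z2-z1)"
      by (rule iter_step[OF q per E _ zz]) (use Suc.IH in auto)
    then show "psi z2 - psi z1 - A/(q-1)*(z2-z1) \<ge> -(C0/q^Suc n)*(z2-z1)" by (simp add: field_simps)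
    qed
  qed
  show ?thesis
  proof (rule ccontr)
    assume "\<not> ?thesis"
    then have D: "psi z2 - psi z1 - m*(z2-z1) < 0" unfolding m_def by simp
    define D where "D = -(psi z2 - psi z1 - m*(z2-z1))"
    have Dp: "D > 0" using D D_def by simp
    obtain n where n: "C0 * (z2 - z1) / D < q ^ n" using real_arch_pow[OF q] by blast
    have qn: "q^n > 0" using q by simp
    have "C0 * (z2 - z1) < D * q^n" using n Dp by (simp add: field_simps)
    then have "(C0/q^n) * (z2-z1) < D" using qn by (simp add: field_simps)
    moreover have "D \<le> (C0/q^n)*(z2-z1)" using Q[of n, rule_format, OF z] unfolding D_def m_def by linarith
    ultimately show False by simp
  qed
qed



lemma sin_mult_bound: "\<bar>sin (real n * x)\<bar> \<le> real n * \<bar>sin x\<bar>"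
proof (induction n)
  case (Suc n)
  have "sin (real (Suc n) * x) = sin (real n * x) * cos x + cos (real n * x) * sin x"
    by (simp add: distrib_right sin_add)
  also have "\<bar>\<dots>\<bar> \<le> \<bar>sin (real n * x)\<bar> * \<bar>cos x\<bar> + \<bar>cos (real n * x)\<bar> * \<bar>sin x\<bar>"
    by (metis abs_mult abs_triangle_ineq)
  also have "\<dots> \<le> \<bar>sin (real n * x)\<bar> + \<bar>sin x\<bar>"
    by (intro add_mono) (auto intro: mult_left_le mult_left_le_one_le abs_cos_le_one)
  finally show ?case using Suc by (simp add: distrib_right)
qed simp

lemma k_nonneg:
  fixes Q x :: real
  assumes Q: "Q \<ge> 1" and x: "0 \<le> x" "x \<le> pi/Q"
  shows "Q * cos (Q * x) * sin x \<le> cos x * sin (Q * x)"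
proof -
  let ?k = "\<lambda>y. cos y * sin(Q * y) - Q * cos(Q * y)* sin y"
  have "?k 0 \<le> ?k x"
  proof (rule DERIV_nonneg_imp_increasing_open[OF x(1)])
    fix y assume y: "0 < y" "y < x"
    have d: "(?k has_real_derivative ((Q^2-1)* sin(Q * y)* sin y)) (at y)"
      by (auto intro!: derivative_eq_intros simp: algebra_simps power2_eq_square)
    have "Q * y \<le> Q * x" using y Q by (intro mult_left_mono) auto
    also have "Q * x \<le> pi" using x Q by (simp add: field_simps)
    finally have "Q * y \<le> pi" .
    then have s1: "sin (Q * y) \<ge> 0" using y Q by (intro sin_ge_zero) auto
    have "pi/Q \<le> pi" using Q by (simp add: field_simps)
    then have s2: "sin y \<ge> 0" using y x by (intro sin_ge_zero) auto
    have "(Q^2-1) \<ge> 0" using Q by (simp add: one_le_power)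
    then have "(Q^2-1)* sin(Q * y)* sin y \<ge> 0" using s1 s2 by simp
    then show "\<exists>d. (?k has_real_derivative d) (at y) \<and> d \<ge> 0" using d by blast
  next
    show "continuous_on {0..x} ?k" by (intro continuous_intros)
  qed
  then show ?thesis by simp
qed

lemma H_deriv:
  fixes Q y :: real
  assumes "sin (Q * y) \<noteq> 0" "sin y \<noteq> 0"
  shows "((\<lambda>x. Q * cot (Q * x) - cot x) has_real_derivative
          (Q * (-inverse (sin (Q * y) ^ 2) * Q) - (-inverse (sin y ^ 2)))) (at y)"
proof -
  have d1: "((\<lambda>x. cot (Q * x)) has_real_derivative (-inverse (sin (Q * y) ^ 2) * Q)) (at y)"
  proof -
    have c: "DERIV cot (Q * y) :> -inverse(sin(Q * y)^2)" by (rule DERIV_cot[OF assms(1)])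
    have m: "((\<lambda>x. Q * x) has_real_derivative Q) (at y)" by (auto intro!: derivative_eq_intros)
    from DERIV_chain2[OF c m] show ?thesis by simp
  qed
  show ?thesis
    by (intro DERIV_diff DERIV_cmult d1 DERIV_cot assms)
qed

lemma H_dec:
  fixes x1 x2 :: real
  assumes q: "q \<ge> 1" and x: "0 < x1" "x1 \<le> x2" "x2 < pi / real q"
  shows "real q * cot (real q * x2) - cot x2 \<le> real q * cot (real q * x1) - cot x1"
proof -
  define Q where "Q = real q"
  have Q: "Q \<ge> 1" using q by (simp add: Q_def)
  have sins: "sin (Q * y) > 0" "sin y > 0" if "0 < y" "y < pi/Q" for y
  proof -
    have "Q * y < pi" using that Q by (simp add: field_simps)
    then show "sin (Q * y) > 0" using that Q by (intro sin_gt_zero) auto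
    have "pi/Q \<le> pi" using Q by (simp add: field_simps)
    then show "sin y > 0" using that by (intro sin_gt_zero) auto
  qed
  have dd: "((\<lambda>x. Q * cot (Q * x) - cot x) has_real_derivative
          (Q * (-inverse (sin (Q * y) ^ 2) * Q) - (-inverse (sin y ^ 2)))) (at y)"
    if "0 < y" "y < pi/Q" for y
    using sins[OF that] by (intro H_deriv) auto
  have "(\<lambda>x. Q * cot (Q * x) - cot x) x2 \<le> (\<lambda>x. Q * cot (Q * x) - cot x) x1"
  proof (rule DERIV_nonpos_imp_decreasing_open[OF x(2)])
    fix y assume y: "x1 < y" "y < x2"
    then have y': "0 < y" "y < pi/Q" using x by (auto simp: Q_def)
    have b: "\<bar>sin (Q * y)\<bar> \<le> Q * \<bar>sin y\<bar>" unfolding Q_def by (rule sin_mult_bound)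
    have s1: "sin (Q * y) > 0" and s2: "sin y > 0" using sins[OF y'] by auto
    have "sin (Q * y) ^ 2 \<le> (Q * sin y) ^ 2" using b s1 s2 Q
      by (intro power_mono) auto
    then have "sin (Q * y) ^ 2 \<le> Q^2 * sin y ^ 2" by (simp add: power_mult_distrib)
    then have "inverse (sin y ^ 2) \<le> Q^2 * inverse (sin (Q * y) ^ 2)"
      using s1 s2 by (simp add: field_simps)
    then have "Q * (-inverse (sin (Q * y) ^ 2) * Q) - (-inverse (sin y ^ 2)) \<le> 0"
      by (simp add: power2_eq_square algebra_simps)
    then show "\<exists>d. ((\<lambda>x. Q * cot (Q * x) - cot x) has_real_derivative d) (at y) \<and> d \<le> 0"
      using dd[OF y'] by blast
  next
    show "continuous_on {x1..x2} (\<lambda>x. Q * cot (Q * x) - cot x)"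
    proof (rule continuous_at_imp_continuous_on, rule ballI)
      fix y assume "y \<in> {x1..x2}"
      then have "0 < y" "y < pi/Q" using x by (auto simp: Q_def)
      then show "isCont (\<lambda>x. Q * cot (Q * x) - cot x) y" using dd DERIV_isCont by blast
    qed
  qed
  then show ?thesis by (simp add: Q_def)
qed

lemma H_nonpos:
  fixes x :: real
  assumes q: "q \<ge> 1" and x: "0 < x" "x < pi / real q"
  shows "real q * cot (real q * x) - cot x \<le> 0"
proof -
  define Q where "Q = real q"
  have Q: "Q \<ge> 1" using q by (simp add: Q_def)
  have "Q * x < pi" using x Q by (simp add: field_simps Q_def)
  then have s1: "sin (Q * x) > 0" using x Q by (intro sin_gt_zero) auto
  have "pi/Q \<le> pi" using Q by (simp add: field_simps)
  then have s2: "sin x > 0" using x by (intro sin_gt_zero) (auto simp: Q_def)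
  have "Q * cos (Q * x) * sin x \<le> cos x * sin (Q * x)"
    using x Q by (intro k_nonneg) (auto simp: Q_def)
  then have "Q * (cos (Q * x) / sin (Q * x)) \<le> cos x / sin x"
    using s1 s2 by (simp add: field_simps)
  then show ?thesis by (simp add: cot_def Q_def)
qed

lemma not_Ints_small:
  fixes u :: real
  assumes "0 < u" "u < 1"
  shows "u \<notin> \<int>"
proof
  assume "u \<in> \<int>"
  then obtain k where k: "u = of_int k" by (auto elim: Ints_cases)
  then have "0 < k" "k < 1" using assms by auto
  then show False by simp
qed

lemma f0_even: "f0 q (-x) = f0 q x"
  by (simp add: f0_def)

lemma f0_deriv:
  fixes u :: real
  assumes q: "q \<ge> 2" and u: "0 < u" "u < 1 / real q"
  shows "(f0 q has_real_derivative pi * (real q * cot (real q * (pi * u)) - cot (pi * u))) (at u)"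
proof -
  define Q where "Q = real q"
  have Q: "Q \<ge> 2" using q by (simp add: Q_def)
  have sins: "sin (pi * Q * v) > 0" "sin (pi * v) > 0" if "0 < v" "v < 1/Q" for v
  proof -
    have "pi * Q * v < pi" using that Q by (simp add: field_simps)
    then show "sin (pi * Q * v) > 0" using that Q by (intro sin_gt_zero) auto
    have "1/Q \<le> 1/2" using Q by (simp add: field_simps)
    then have "v < 1" using that by linarith
    then have "pi * v < pi" by simp
    then show "sin (pi * v) > 0" using that by (intro sin_gt_zero) auto
  qed
  let ?g = "\<lambda>v. ln (sin (pi * Q * v)) - ln (sin (pi * v))"
  have s: "sin (pi * Q * u) > 0" "sin (pi * u) > 0" using sins u by (auto simp: Q_def)
  have dg: "(?g has_real_derivative pi * (Q * cot (Q * (pi * u)) - cot (pi * u))) (at u)"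
    using s by (auto intro!: derivative_eq_intros simp: cot_def field_simps mult_ac)
  show ?thesis
  proof (rule has_field_derivative_transform_within_open[OF dg[unfolded Q_def], of "{0<..<1/Q}"])
    show "open {0<..<1/Q}" by simp
    show "u \<in> {0<..<1/Q}" using u by (simp add: Q_def)
    fix v assume v: "v \<in> {0<..<1/Q}"
    then have v': "0 < v" "v < 1/Q" by auto
    have "1/Q \<le> 1/2" using Q by (simp add: field_simps)
    then have "v < 1" using v' by linarith
    then have ni: "v \<notin> \<int>" using v' not_Ints_small by blast
    have sv: "sin (pi * Q * v) > 0" "sin (pi * v) > 0" using sins[OF v'] by auto
    show "ln (sin (pi * real q * v)) - ln (sin (pi * v)) = f0 q v"
      using ni sv by (simp add: f0_def Q_def ln_div)
  qed
qed



lemma Phi: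
  fixes q :: nat and \<theta> u1 u2 :: real
  assumes q: "q \<ge> 2" and th: "0 < \<theta>" "\<theta> < 1 / real q"
   and cont: "continuous_on {\<theta> - 1 / real q..\<theta>} (f0 q)"
   and u: "\<theta> - 1 / real q \<le> u1" "u1 \<le> u2" "u2 \<le> \<theta>"
  shows "deriv (f0 q) \<theta> * (u2 - u1) \<le> f0 q u2 - f0 q u1"
proof -
  define Q where "Q = real q"
  define H where "H = (\<lambda>x. Q * cot (Q * x) - cot x)"
  have Q: "Q \<ge> 2" using q by (simp add: Q_def)
  have piv: "pi * v < pi / real q" if "v < 1/Q" for v
  proof -
    have "pi * v < pi * (1/Q)" using that pi_gt_zero by (intro mult_strict_left_mono)
    then show ?thesis by (simp add: Q_def)
  qed
  have fd: "(f0 q has_real_derivative pi * H (pi * v)) (at v)" if "0 < v" "v < 1/Q" for v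
    using f0_deriv[OF q that(1)] that by (simp add: H_def Q_def)
  define a where "a = deriv (f0 q) \<theta>"
  have a: "a = pi * H (pi * \<theta>)" unfolding a_def
    using fd[of \<theta>] th by (intro DERIV_imp_deriv) (auto simp: Q_def)
  have Hle: "H (pi * \<theta>) \<le> 0" unfolding H_def Q_def
    using th q piv[of \<theta>] by (intro H_nonpos) (auto simp: Q_def)
  have Hv: "H (pi * v) \<le> 0" if "0 < v" "v < 1/Q" for v unfolding H_def Q_def
    using that q piv[of v] by (intro H_nonpos) (auto simp: Q_def)
  have Hdec: "H (pi * \<theta>) \<le> H (pi * v)" if "0 < v" "v \<le> \<theta>" for v unfolding H_def Q_def
    using that q piv[of \<theta>] th by (intro H_dec) (auto simp: Q_def)
  have ale: "a \<le> 0" using a Hle by (simp add: mult_nonneg_nonpos)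
  have alpha: "f0 q v1 - a * v1 \<le> f0 q v2 - a * v2" if v: "0 \<le> v1" "v1 \<le> v2" "v2 \<le> \<theta>" for v1 v2
  proof (rule DERIV_nonneg_imp_increasing_open[of v1 v2 "\<lambda>v. f0 q v - a * v"])
    show "v1 \<le> v2" by fact
    fix y assume y: "v1 < y" "y < v2"
    then have y': "0 < y" "y < 1/Q" "y \<le> \<theta>" using v th by (auto simp: Q_def)
    have "((\<lambda>v. f0 q v - a * v) has_real_derivative (pi * H (pi * y) - a * 1)) (at y)"
      by (intro DERIV_diff fd[OF y'(1,2)] DERIV_cmult DERIV_ident)
    moreover have "pi * H (pi * y) - a * 1 \<ge> 0" using Hdec[OF y'(1,3)] a by simp
    ultimately show "\<exists>d. ((\<lambda>v. f0 q v - a * v) has_real_derivative d) (at y) \<and> 0 \<le> d" by blast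
  next
    have "{v1..v2} \<subseteq> {\<theta> - 1 / real q..\<theta>}" using v th by auto
    then have "continuous_on {v1..v2} (f0 q)" using cont continuous_on_subset by blast
    then show "continuous_on {v1..v2} (\<lambda>v. f0 q v - a * v)" by (intro continuous_intros)
  qed
  have beta: "f0 q w1 \<le> f0 q w2" if w: "\<theta> - 1/Q \<le> w1" "w1 \<le> w2" "w2 \<le> 0" for w1 w2
  proof -
    have "f0 q (-w2) \<ge> f0 q (-w1)"
    proof (rule DERIV_nonpos_imp_decreasing_open[of "-w2" "-w1" "f0 q"])
      show "-w2 \<le> -w1" using w by simp
      fix y assume y: "-w2 < y" "y < -w1"
      then have y': "0 < y" "y < 1/Q" using w th by (auto simp: Q_def)
      show "\<exists>d. (f0 q has_real_derivative d) (at y) \<and> d \<le> 0"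
        using fd[OF y'] Hv[OF y'] by (intro exI[of _ "pi * H (pi * y)"]) (simp add: mult_nonneg_nonpos)
    next
      have "{w1..w2} \<subseteq> {\<theta> - 1 / real q..\<theta>}" using w th by (auto simp: Q_def)
      then have c1: "continuous_on {w1..w2} (f0 q)" using cont continuous_on_subset by blast
      have "uminus ` {-w2..-w1} \<subseteq> {w1..w2}" by auto
      then have "continuous_on {-w2..-w1} (\<lambda>x. f0 q (-x))"
        by (intro continuous_on_compose2[OF c1]) (auto intro: continuous_intros)
      then show "continuous_on {-w2..-w1} (f0 q)" by (simp add: f0_even)
    qed
    then show ?thesis by (simp add: f0_even)
  qed
  show ?thesis
  proof -
    consider "u2 \<le> 0" | "0 \<le> u1" | "u1 < 0" "0 < u2" by linarith
    then have "a * (u2 - u1) \<le> f0 q u2 - f0 q u1"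
    proof cases
      case 1
      have "f0 q u1 \<le> f0 q u2" using beta[of u1 u2] u 1 by (simp add: Q_def)
      moreover have "a * (u2 - u1) \<le> 0" using ale u by (simp add: mult_nonpos_nonneg)
      ultimately show ?thesis by simp
    next
      case 2
      then show ?thesis using alpha[of u1 u2] u by (simp add: algebra_simps)
    next
      case 3
      have "f0 q 0 - a * 0 \<le> f0 q u2 - a * u2" using alpha[of 0 u2] u 3 by simp
      moreover have "f0 q u1 \<le> f0 q 0" using beta[of u1 0] u 3 by (simp add: Q_def)
      moreover have "a * u1 \<ge> 0" using ale 3 by (simp add: mult_nonpos_nonpos)
      ultimately show ?thesis by (simp add: algebra_simps)
    qed
    then show ?thesis by (simp add: a_def)
  qed
qed



theorem lemma5p5:
  fixes q :: nat and c lam beta :: real and psi :: "real \<Rightarrow> real"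
  assumes "q \<ge> 2"
    and "- 1 / real q - c < lam" and "lam < - c"
    and "pre_sturmian_with q c lam psi beta"
  shows "(\<forall>x \<in> {lam + 1 / real q <..< lam + 2 / real q}.
            let \<theta> = lam + 1 / real q + c; t = x - lam - 1 / real q in
            psi (real q * x) - psi (real q * (lam + 1 / real q))
              \<ge> f0 q (1 / real q - \<theta> - t) - f0 q (1 / real q - \<theta>)
                 + deriv (f0 q) \<theta> * t / (real q - 1))
       \<and> (\<forall>x \<in> {lam - 1 / real q <..< lam}.
            let \<theta> = lam + 1 / real q + c; t = lam - x in
            psi (real q * x) - psi (real q * lam)
              \<ge> f0 q (\<theta> - t) - f0 q \<theta>
                 + deriv (f0 q) (1 / real q - \<theta>) * t / (real q - 1))"
proof -
  have q: "q \<ge> 2" by fact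
  have Q1: "real q > 1" using q by simp
  have Qne: "real q \<noteq> 0" using q by simp
  obtain Lf where fcL: "Lf-lipschitz_on (Cset q lam) (fc q c)"
    using assms(4) unfolding pre_sturmian_with_def by blast
  have per: "\<forall>x. psi (x + 1) = psi x" using assms(4) unfolding pre_sturmian_with_def by blast
  obtain Lp where psiL: "Lp-lipschitz_on UNIV psi"
    using assms(4) unfolding pre_sturmian_with_def by blast
  have E0: "\<forall>x \<in> Cset q lam. fc q c x + psi x - psi (real q * x) = beta"
    using assms(4) unfolding pre_sturmian_with_def by blast
  have sub: "{lam..lam + 1 / real q} \<subseteq> Cset q lam"
    unfolding Cset_def by (auto intro: exI[of _ 0])
  have E: "psi (real q * y) = fc q c y + psi y - beta" if "lam \<le> y" "y \<le> lam + 1 / real q" for y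
    using E0 sub that by force
  have per': "psi (y - 1) = psi y" for y using per[rule_format, of "y - 1"] by simp
  have Lip: "\<bar>psi x - psi y\<bar> \<le> Lp * \<bar>x - y\<bar>" for x y
    using lipschitz_onD[OF psiL, of x y] by (simp add: dist_real_def)
  have Lip': "\<bar>(- psi x) - (- psi y)\<bar> \<le> Lp * \<bar>x - y\<bar>" for x y
    using Lip[of x y] by (simp add: abs_minus_commute)
  have fcc: "continuous_on {lam..lam + 1 / real q} (fc q c)"
    using lipschitz_on_continuous_on[OF lipschitz_on_subset[OF fcL sub]] .
  define \<theta> where "\<theta> = lam + 1 / real q + c"
  have th: "0 < \<theta>" "\<theta> < 1 / real q" using assms(2,3) unfolding \<theta>_def by (auto simp: field_simps)
  have th': "0 < 1 / real q - \<theta>" "1 / real q - \<theta> < 1 / real q" using th by auto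
  have cont1: "continuous_on {\<theta> - 1 / real q..\<theta>} (f0 q)"
  proof -
    have "(\<lambda>u. u - c) ` {\<theta> - 1 / real q..\<theta>} \<subseteq> {lam..lam + 1 / real q}"
      unfolding \<theta>_def by auto
    then have "continuous_on {\<theta> - 1 / real q..\<theta>} (\<lambda>u. fc q c (u - c))"
      by (intro continuous_on_compose2[OF fcc]) (auto intro!: continuous_intros)
    then show ?thesis by (simp add: fc_def)
  qed
  have cont2: "continuous_on {(1 / real q - \<theta>) - 1 / real q..(1 / real q - \<theta>)} (f0 q)"
  proof -
    have "(\<lambda>u. - u - c) ` {(1 / real q - \<theta>) - 1 / real q..(1 / real q - \<theta>)} \<subseteq> {lam..lam + 1 / real q}"
      unfolding \<theta>_def by auto
    then have "continuous_on {(1 / real q - \<theta>) - 1 / real q..(1 / real q - \<theta>)} (\<lambda>u. fc q c (- u - c))"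
      by (intro continuous_on_compose2[OF fcc]) (auto intro!: continuous_intros)
    moreover have "fc q c (- u - c) = f0 q u" for u
      using f0_even[of q u] by (simp add: fc_def)
    ultimately show ?thesis by simp
  qed
  define a where "a = deriv (f0 q) \<theta>"
  define a' where "a' = deriv (f0 q) (1 / real q - \<theta>)"
  have C1: "psi (real q * y2) - psi (real q * y1) - (psi y2 - psi y1) \<ge> a * (y2 - y1)"
    if y: "lam \<le> y1" "y1 \<le> y2" "y2 \<le> lam + 1 / real q" for y1 y2
  proof -
    have "a * ((y2 + c) - (y1 + c)) \<le> f0 q (y2 + c) - f0 q (y1 + c)"
      unfolding a_def using y by (intro Phi[OF q th cont1]) (auto simp: \<theta>_def)
    then show ?thesis using E[of y1] E[of y2] y by (simp add: fc_def)
  qed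
  have C2: "(- psi (real q * y2)) - (- psi (real q * y1)) - ((- psi y2) - (- psi y1)) \<ge> a' * (y2 - y1)"
    if y: "lam \<le> y1" "y1 \<le> y2" "y2 \<le> lam + 1 / real q" for y1 y2
  proof -
    have "a' * ((- y1 - c) - (- y2 - c)) \<le> f0 q (- y1 - c) - f0 q (- y2 - c)"
      unfolding a'_def using y by (intro Phi[OF q th' cont2]) (auto simp: \<theta>_def)
    moreover have "f0 q (- y - c) = fc q c y" for y
      using f0_even[of q "y + c"] by (simp add: fc_def)
    ultimately show ?thesis using E[of y1] E[of y2] y by simp
  qed
  have G1: "psi z2 - psi z1 \<ge> a / (real q - 1) * (z2 - z1)" if "z1 \<le> z2" "z2 \<le> z1 + 1" for z1 z2
    by (rule iter_all[OF Q1 per C1 Lip that]) auto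
  have per2: "\<forall>x. - psi (x + 1) = - psi x" using per by simp
  have G2: "(- psi z2) - (- psi z1) \<ge> a' / (real q - 1) * (z2 - z1)" if "z1 \<le> z2" "z2 \<le> z1 + 1" for z1 z2
    using iter_all[of "real q" "\<lambda>z. - psi z" lam a' Lp z1 z2] Q1 per2 C2 Lip' that by auto
  have inv: "real q * (1 / real q) = 1" using Qne by simp
  have part1: "psi (real q * x) - psi (real q * (lam + 1 / real q))
              \<ge> f0 q (1 / real q - \<theta> - t) - f0 q (1 / real q - \<theta>)
                 + a * t / (real q - 1)"
    if x: "x \<in> {lam + 1 / real q <..< lam + 2 / real q}" and t: "t = x - lam - 1 / real q" for x t
  proof -
    have t0: "0 < t" "t < 1 / real q" using x t by (auto simp: field_simps)
    have t1: "t \<le> 1" using t0 Q1 by (smt (verit) divide_le_eq_1_pos)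
    have e1: "real q * x = real q * (lam + t) + 1" using t Qne by (simp add: field_simps)
    have e2: "real q * (lam + 1 / real q) = real q * lam + 1" using inv by (simp add: algebra_simps)
    have p1: "psi (real q * x) = psi (real q * (lam + t))" using e1 per by simp
    have p2: "psi (real q * (lam + 1 / real q)) = psi (real q * lam)" using e2 per by simp
    have E1: "psi (real q * (lam + t)) = fc q c (lam + t) + psi (lam + t) - beta"
      using t0 by (intro E) auto
    have E2: "psi (real q * lam) = fc q c lam + psi lam - beta"
      using t0 Q1 by (intro E) auto
    have f1: "fc q c (lam + t) = f0 q (1 / real q - \<theta> - t)"
      using f0_even[of q "1 / real q - \<theta> - t"] by (simp add: fc_def \<theta>_def algebra_simps)
    have f2: "fc q c lam = f0 q (1 / real q - \<theta>)"
      using f0_even[of q "1 / real q - \<theta>"] by (simp add: fc_def \<theta>_def algebra_simps)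
    have g: "psi (lam + t) - psi lam \<ge> a / (real q - 1) * t"
      using G1[of lam "lam + t"] t0 t1 by simp
    show ?thesis using p1 p2 E1 E2 f1 f2 g by (simp add: algebra_simps)
  qed
  have part2: "psi (real q * x) - psi (real q * lam)
              \<ge> f0 q (\<theta> - t) - f0 q \<theta> + a' * t / (real q - 1)"
    if x: "x \<in> {lam - 1 / real q <..< lam}" and t: "t = lam - x" for x t
  proof -
    have t0: "0 < t" "t < 1 / real q" using x t by (auto simp: field_simps)
    have t1: "t \<le> 1" using t0 Q1 by (smt (verit) divide_le_eq_1_pos)
    have xe: "x = lam - t" using t by simp
    have "real q * (lam + 1 / real q - t) = real q * lam + real q * (1 / real q) - real q * t"
      by (simp add: algebra_simps)
    moreover have "real q * x = real q * lam - real q * t" using xe by (simp add: right_diff_distrib)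
    ultimately have e1: "real q * x = real q * (lam + 1 / real q - t) - 1" using inv by linarith
    have e2: "real q * lam = real q * (lam + 1 / real q) - 1" using inv by (simp add: algebra_simps)
    have p1: "psi (real q * x) = psi (real q * (lam + 1 / real q - t))" using e1 per' by simp
    have p2: "psi (real q * lam) = psi (real q * (lam + 1 / real q))" using e2 per' by simp
    have E1: "psi (real q * (lam + 1 / real q - t)) = fc q c (lam + 1 / real q - t) + psi (lam + 1 / real q - t) - beta"
      using t0 by (intro E) auto
    have E2: "psi (real q * (lam + 1 / real q)) = fc q c (lam + 1 / real q) + psi (lam + 1 / real q) - beta"
      using t0 Q1 by (intro E) auto
    have f1: "fc q c (lam + 1 / real q - t) = f0 q (\<theta> - t)"
      by (simp add: fc_def \<theta>_def algebra_simps)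
    have f2: "fc q c (lam + 1 / real q) = f0 q \<theta>"
      by (simp add: fc_def \<theta>_def algebra_simps)
    have g: "(- psi (lam + 1 / real q)) - (- psi (lam + 1 / real q - t)) \<ge> a' / (real q - 1) * t"
      using G2[of "lam + 1 / real q - t" "lam + 1 / real q"] t0 t1 by simp
    show ?thesis using p1 p2 E1 E2 f1 f2 g by (simp add: algebra_simps)
  qed
  show ?thesis
    using part1 part2 unfolding Let_def a_def a'_def \<theta>_def by blast
qed


end
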